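(* Let $m\ge1$ and let $\mathcal{E}:\ w''=w^m\Phi(z,w,w'/w^m)$ and $\mathcal{E}^*:\ w''=w^m\Phi^*(z,w,w'/w^m)$ be two ODEs, where $\Phi,\Phi^*\in\mathbb{C}[[z,w,\zeta]]$ satisfy $\Phi,\Phi^*=O(\zeta^2)$. Write $\Phi=\sum_{k\ge2}\Phi_k(z,w)\zeta^k$, $\Phi_2=\sum_jA_j(w)z^j$, $\Phi_3=\sum_jB_j(w)z^j$, and similarly $A_j^*,B_j^*$ for $\Phi^*$. If there exists a transformation from $\mathcal{E}$ to $\mathcal{E}^*$ of the admissible kind described below, then $A_0(0)=A_0^*(0)$, $A_1(0)=A_1^*(0)$, $B_0(0)=B_0^*(0)$, $B_1(0)=B_1^*(0)$.
   Context: An admissible transformation is an invertible formal map $(z,w)\mapsto(z+f(z,w),\ w+wg_0(w)+w^mg(z,w))$ with $f(0,0)=0$, $f_z(0,0)=0$, $g_0(0)=0$, $g(z,w)$ divisible by $zw$, and $g_0^{(\ell)}(0)\in\mathbb{R}$ for $\ell\le m-1$, which transforms $\mathcal{E}$ into $\mathcal{E}^*$, i.e. maps graphs of solutions of one equation to graphs of solutions of the other (for formal objects, in the sense of the standard transformation rule for second order ODEs under point transformations). *)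

theory Defs
  imports Complex_Main
begin

text \<open>Formal power series in three variables (z, w, zeta) over the complex numbers,
  represented by their coefficient functions: p i j k is the coefficient of
  z^i w^j zeta^k.\<close>

type_synonym ps3 = "nat \<Rightarrow> nat \<Rightarrow> nat \<Rightarrow> complex"

definition ps_const :: "complex \<Rightarrow> ps3" where
  "ps_const c = (\<lambda>i j k. if i = 0 \<and> j = 0 \<and> k = 0 then c else 0)"

definition ps_z :: ps3 where
  "ps_z = (\<lambda>i j k. if i = 1 \<and> j = 0 \<and> k = 0 then 1 else 0)"

definition ps_w :: ps3 where
  "ps_w = (\<lambda>i j k. if i = 0 \<and> j = 1 \<and> k = 0 then 1 else 0)"

definition ps_zeta :: ps3 where
  "ps_zeta = (\<lambda>i j k. if i = 0 \<and> j = 0 \<and> k = 1 then 1 else 0)"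

definition ps_add :: "ps3 \<Rightarrow> ps3 \<Rightarrow> ps3" where
  "ps_add p q = (\<lambda>i j k. p i j k + q i j k)"

definition ps_diff :: "ps3 \<Rightarrow> ps3 \<Rightarrow> ps3" where
  "ps_diff p q = (\<lambda>i j k. p i j k - q i j k)"

definition ps_mult :: "ps3 \<Rightarrow> ps3 \<Rightarrow> ps3" where
  "ps_mult p q = (\<lambda>i j k. \<Sum>a\<le>i. \<Sum>b\<le>j. \<Sum>c\<le>k. p a b c * q (i - a) (j - b) (k - c))"

fun ps_pow :: "ps3 \<Rightarrow> nat \<Rightarrow> ps3" where
  "ps_pow p 0 = ps_const 1"
| "ps_pow p (Suc n) = ps_mult p (ps_pow p n)"

definition ps_dz :: "ps3 \<Rightarrow> ps3" where
  "ps_dz p = (\<lambda>i j k. of_nat (i + 1) * p (i + 1) j k)"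

definition ps_dw :: "ps3 \<Rightarrow> ps3" where
  "ps_dw p = (\<lambda>i j k. of_nat (j + 1) * p i (j + 1) k)"

definition ps_dzeta :: "ps3 \<Rightarrow> ps3" where
  "ps_dzeta p = (\<lambda>i j k. of_nat (k + 1) * p i j (k + 1))"

text \<open>Formal substitution P(A,B,C), meaningful when A, B, C have zero constant term:
  then only monomials of total degree at most i+j+k of P contribute to the
  coefficient of z^i w^j zeta^k.\<close>
definition ps_comp :: "ps3 \<Rightarrow> ps3 \<Rightarrow> ps3 \<Rightarrow> ps3 \<Rightarrow> ps3" where
  "ps_comp P A B C = (\<lambda>i j k.
     \<Sum>a\<le>i+j+k. \<Sum>b\<le>i+j+k-a. \<Sum>c\<le>i+j+k-a-b.
        P a b c * ps_mult (ps_pow A a) (ps_mult (ps_pow B b) (ps_pow C c)) i j k)"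

definition ps_of2 :: "(nat \<Rightarrow> nat \<Rightarrow> complex) \<Rightarrow> ps3" where
  "ps_of2 f = (\<lambda>i j k. if k = 0 then f i j else 0)"

definition ps_of_w :: "(nat \<Rightarrow> complex) \<Rightarrow> ps3" where
  "ps_of_w g = (\<lambda>i j k. if i = 0 \<and> k = 0 then g j else 0)"

definition zeta_free :: "ps3 \<Rightarrow> bool" where
  "zeta_free p \<longleftrightarrow> (\<forall>i j k. 0 < k \<longrightarrow> p i j k = 0)"

text \<open>Total derivative for the ODE w'' = w^m Phi(z,w,w'/w^m), written in the
  coordinates (z,w,zeta) with w' = w^m zeta:
  D = d/dz + w^m zeta d/dw + (Phi - m w^(m-1) zeta^2) d/dzeta.\<close>
definition ps_D :: "nat \<Rightarrow> ps3 \<Rightarrow> ps3 \<Rightarrow> ps3" where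
  "ps_D m Phi h =
     ps_add (ps_dz h)
      (ps_add (ps_mult (ps_mult (ps_pow ps_w m) ps_zeta) (ps_dw h))
        (ps_mult (ps_diff Phi (ps_mult (ps_const (of_nat m))
                     (ps_mult (ps_pow ps_w (m - 1)) (ps_pow ps_zeta 2))))
                 (ps_dzeta h)))"

text \<open>The point transformation (z,w) to (Z,W) maps solutions of
  w'' = w^m Phi(z,w,w'/w^m) to solutions of w'' = w^m Phis(z,w,w'/w^m).
  With P = DW/DZ the new slope and Pi = P/W^m, the standard rule
  D P = DZ * F*(Z,W,P) becomes (after division by W^(m-1))
  W * D Pi + m * DW * Pi = W * DZ * Phis(Z,W,Pi), where Pi is the
  (unique) series with W^m * DZ * Pi = DW.\<close>
definition transforms_ode :: "nat \<Rightarrow> ps3 \<Rightarrow> ps3 \<Rightarrow> ps3 \<Rightarrow> ps3 \<Rightarrow> bool" where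
  "transforms_ode m Phi Phis Z W \<longleftrightarrow>
     (\<exists>Pi. ps_mult (ps_pow W m) (ps_mult (ps_D m Phi Z) Pi) = ps_D m Phi W \<and>
           ps_add (ps_mult W (ps_D m Phi Pi))
                  (ps_mult (ps_const (of_nat m)) (ps_mult (ps_D m Phi W) Pi))
           = ps_mult W (ps_mult (ps_D m Phi Z) (ps_comp Phis Z W Pi)))"

definition formal_map_invertible :: "ps3 \<Rightarrow> ps3 \<Rightarrow> bool" where
  "formal_map_invertible Z W \<longleftrightarrow>
     (\<exists>U V. zeta_free U \<and> zeta_free V \<and> U 0 0 0 = 0 \<and> V 0 0 0 = 0 \<and>
        ps_comp Z U V ps_zeta = ps_z \<and> ps_comp W U V ps_zeta = ps_w \<and>
        ps_comp U Z W ps_zeta = ps_z \<and> ps_comp V Z W ps_zeta = ps_w)"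

definition admissible ::
  "nat \<Rightarrow> ps3 \<Rightarrow> ps3 \<Rightarrow> (nat \<Rightarrow> nat \<Rightarrow> complex) \<Rightarrow> (nat \<Rightarrow> complex)
    \<Rightarrow> (nat \<Rightarrow> nat \<Rightarrow> complex) \<Rightarrow> bool" where
  "admissible m Phi Phis f g0 g \<longleftrightarrow>
     f 0 0 = 0 \<and> f 1 0 = 0 \<and> g0 0 = 0 \<and>
     (\<forall>i j. i = 0 \<or> j = 0 \<longrightarrow> g i j = 0) \<and>
     (\<forall>l \<le> m - 1. g0 l \<in> \<real>) \<and>
     (let Z = ps_add ps_z (ps_of2 f);
          W = ps_add ps_w (ps_add (ps_mult ps_w (ps_of_w g0))
                                  (ps_mult (ps_pow ps_w m) (ps_of2 g)))
      in formal_map_invertible Z W \<and> transforms_ode m Phi Phis Z W)"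

text \<open>A_j(w) = coefficient of z^j zeta^2 in Phi; B_j(w) = that of z^j zeta^3;
  coef_A Phi j l is the coefficient of w^l in A_j, so A_j(0) = coef_A Phi j 0.\<close>
definition coef_A :: "ps3 \<Rightarrow> nat \<Rightarrow> nat \<Rightarrow> complex" where
  "coef_A Phi j l = Phi j l 2"

definition coef_B :: "ps3 \<Rightarrow> nat \<Rightarrow> nat \<Rightarrow> complex" where
  "coef_B Phi j l = Phi j l 3"

end

theory Submission
  imports Defs
begin

definition mono3 :: "nat \<Rightarrow> nat \<Rightarrow> nat \<Rightarrow> ps3" where
  "mono3 a b c = (\<lambda>i j k. if i = a \<and> j = b \<and> k = c then 1 else 0)"

lemma sum_single:
  assumes "finite S" "n \<in> S" "\<And>b. b \<in> S \<Longrightarrow> b \<noteq> n \<Longrightarrow> F b = 0"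
  shows "sum F S = F n"
proof -
  have "sum F S = F n + sum F (S - {n})" using assms by (simp add: sum.remove)
  also have "sum F (S - {n}) = 0" using assms by (intro sum.neutral) auto
  finally show ?thesis by simp
qed

lemma single_delta:
  fixes F :: "nat \<Rightarrow> 'a::comm_monoid_add"
  assumes "\<And>x. x \<noteq> a \<Longrightarrow> F x = 0"
  shows "(\<Sum>x\<le>i. F x) = (if a \<le> i then F a else 0)"
proof (cases "a \<le> i")
  case True thus ?thesis using assms by (intro trans[OF sum_single[where n=a]]) auto
next
  case False thus ?thesis using assms by (auto intro!: sum.neutral)
qed

lemma double_delta:
  fixes F :: "nat \<Rightarrow> nat \<Rightarrow> 'a::comm_monoid_add"
  assumes "\<And>x y. (x, y) \<noteq> (a, b) \<Longrightarrow> F x y = 0"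
  shows "(\<Sum>x\<le>i. \<Sum>y\<le>j. F x y) = (if a \<le> i \<and> b \<le> j then F a b else 0)"
proof -
  have "(\<Sum>x\<le>i. \<Sum>y\<le>j. F x y) = (if a \<le> i then (\<Sum>y\<le>j. F a y) else 0)"
    using assms by (intro single_delta sum.neutral) auto
  also have "\<dots> = (if a \<le> i \<and> b \<le> j then F a b else 0)"
    using assms single_delta[where a=b and F="F a" and i=j] by auto
  finally show ?thesis .
qed

lemma triple_delta:
  fixes F :: "nat \<Rightarrow> nat \<Rightarrow> nat \<Rightarrow> 'a::comm_monoid_add"
  assumes "\<And>x y z. (x, y, z) \<noteq> (a, b, c) \<Longrightarrow> F x y z = 0"
  shows "(\<Sum>x\<le>i. \<Sum>y\<le>j. \<Sum>z\<le>k. F x y z) =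
         (if a \<le> i \<and> b \<le> j \<and> c \<le> k then F a b c else 0)"
proof -
  have "(\<Sum>x\<le>i. \<Sum>y\<le>j. \<Sum>z\<le>k. F x y z) = (if a \<le> i then (\<Sum>y\<le>j. \<Sum>z\<le>k. F a y z) else 0)"
    using assms by (intro single_delta sum.neutral) auto
  also have "\<dots> = (if a \<le> i \<and> b \<le> j \<and> c \<le> k then F a b c else 0)"
    using assms double_delta[where a=b and b=c and F="F a" and i=j and j=k] by auto
  finally show ?thesis .
qed

lemma mult_mono3:
  "ps_mult (mono3 a b c) X i j k =
     (if a \<le> i \<and> b \<le> j \<and> c \<le> k then X (i-a) (j-b) (k-c) else 0)"
  unfolding ps_mult_def by (subst triple_delta[where a=a and b=b and c=c]) (auto simp: mono3_def)

lemma mono3_mult: "ps_mult (mono3 a b c) (mono3 a' b' c') = mono3 (a+a') (b+b') (c+c')"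
  by (auto simp: mult_mono3 fun_eq_iff) (auto simp: mono3_def)

lemma const1_mono: "ps_const 1 = mono3 0 0 0"
  by (auto simp: ps_const_def mono3_def fun_eq_iff)

lemma mult_const: "ps_mult (ps_const c) X i j k = c * X i j k"
proof -
  have "ps_const c = (\<lambda>i j k. c * mono3 0 0 0 i j k)"
    by (auto simp: ps_const_def mono3_def fun_eq_iff)
  hence "ps_mult (ps_const c) X i j k = c * ps_mult (mono3 0 0 0) X i j k"
    by (simp add: ps_mult_def sum_distrib_left mult.assoc)
  thus ?thesis by (simp add: mult_mono3)
qed

lemma mult_one: "ps_mult (mono3 0 0 0) X = X"
  by (simp add: fun_eq_iff mult_mono3)

lemma pow_mono: "ps_pow (mono3 a b c) n = mono3 (n*a) (n*b) (n*c)"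
  by (induction n) (simp_all add: const1_mono mono3_mult)

lemma ps_w_mono: "ps_w = mono3 0 1 0" by (simp add: ps_w_def mono3_def)
lemma ps_z_mono: "ps_z = mono3 1 0 0" by (simp add: ps_z_def mono3_def)
lemma ps_zeta_mono: "ps_zeta = mono3 0 0 1" by (simp add: ps_zeta_def mono3_def)

lemma mult_j0: "ps_mult p q i 0 k = (\<Sum>a\<le>i. \<Sum>c\<le>k. p a 0 c * q (i-a) 0 (k-c))"
  by (simp add: ps_mult_def)

lemma mult_j1: "ps_mult p q i (Suc 0) k =
   (\<Sum>a\<le>i. \<Sum>c\<le>k. p a 0 c * q (i-a) 1 (k-c) + p a 1 c * q (i-a) 0 (k-c))"
  by (simp add: ps_mult_def sum.distrib atMost_Suc)

definition wo :: "ps3 \<Rightarrow> nat \<Rightarrow> bool" where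
  "wo p n \<longleftrightarrow> (\<forall>i j k. j < n \<longrightarrow> p i j k = 0)"

definition lead :: "ps3 \<Rightarrow> nat \<Rightarrow> bool" where
  "lead p n \<longleftrightarrow> (\<forall>i k. p i n k = (if i = 0 \<and> k = 0 then 1 else 0))"

lemma wo_0: "wo p 0" by (simp add: wo_def)

lemma wo_mult: assumes "wo p n" "wo q n'" shows "wo (ps_mult p q) (n+n')"
  unfolding wo_def ps_mult_def
proof (intro allI impI sum.neutral ballI)
  fix i j k a b c assume "j < n + n'" "b \<in> {..j}"
  thus "p a b c * q (i - a) (j - b) (k - c) = 0"
    using assms unfolding wo_def by (cases "b < n") auto
qed

lemma wo_mult_coeff:
  assumes "wo p n" "wo q n'"
  shows "ps_mult p q i (n+n') k = (\<Sum>a\<le>i. \<Sum>c\<le>k. p a n c * q (i-a) n' (k-c))"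
proof -
  have key: "(\<Sum>b\<le>n + n'. \<Sum>c\<le>k. p a b c * q (i - a) (n + n' - b) (k - c)) =
        (\<Sum>c\<le>k. p a n c * q (i - a) n' (k - c))" for a
  proof -
    have z: "(\<Sum>c\<le>k. p a b c * q (i - a) (n + n' - b) (k - c)) = 0"
      if "b \<in> {..n+n'}" "b \<noteq> n" for b
      using assms that unfolding wo_def by (cases "b < n") (auto intro!: sum.neutral)
    show ?thesis
      using sum_single[of "{..n+n'}" n "\<lambda>b. \<Sum>c\<le>k. p a b c * q (i - a) (n + n' - b) (k - c)"] z
      by simp
  qed
  show ?thesis unfolding ps_mult_def by (simp only: key)
qed

lemma lead_delta:
  assumes "lead p n"
  shows "(\<Sum>a\<le>i. \<Sum>c\<le>k. p a n c * Q (i-a) (k-c)) = Q i k"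
  using assms unfolding lead_def
  by (subst double_delta[where a=0 and b=0]) auto

lemma pow_wo_lead:
  assumes "wo p 1" "lead p 1"
  shows "wo (ps_pow p n) n \<and> lead (ps_pow p n) n"
proof (induction n)
  case 0
  thus ?case by (simp add: wo_def lead_def ps_const_def)
next
  case (Suc n)
  have w: "wo (ps_pow p (Suc n)) (Suc n)"
    using wo_mult[OF assms(1) conjunct1[OF Suc.IH]] by simp
  have "lead (ps_pow p (Suc n)) (1 + n)"
    unfolding lead_def
  proof (intro allI)
    fix i k
    have "ps_pow p (Suc n) i (1 + n) k = (\<Sum>a\<le>i. \<Sum>c\<le>k. p a 1 c * ps_pow p n (i-a) n (k-c))"
      unfolding ps_pow.simps by (rule wo_mult_coeff[OF assms(1) conjunct1[OF Suc.IH]])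
    also have "\<dots> = ps_pow p n i n k"
      by (rule lead_delta[OF assms(2), where Q="\<lambda>i k. ps_pow p n i n k"])
    finally show "ps_pow p (Suc n) i (1 + n) k = (if i = 0 \<and> k = 0 then 1 else 0)"
      using conjunct2[OF Suc.IH] unfolding lead_def by simp
  qed
  thus ?case using w by simp
qed

lemma pow_wo: assumes "wo p 1" shows "wo (ps_pow p n) n"
proof (induction n)
  case 0 thus ?case by (simp add: wo_def)
next
  case (Suc n) thus ?case using wo_mult[OF assms Suc.IH] by simp
qed

definition agr :: "nat \<Rightarrow> ps3 \<Rightarrow> ps3 \<Rightarrow> bool" where
  "agr N p q \<longleftrightarrow> (\<forall>i\<le>N. \<forall>k. p i 0 k = q i 0 k)"

lemma agr_mult: assumes "agr N p p'" "agr N q q'" shows "agr N (ps_mult p q) (ps_mult p' q')"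
  unfolding agr_def mult_j0
proof (intro allI impI sum.cong refl)
  fix i k a c assume "i \<le> N" "a \<in> {..i}"
  thus "p a 0 c * q (i - a) 0 (k - c) = p' a 0 c * q' (i - a) 0 (k - c)"
    using assms unfolding agr_def by auto
qed

lemma agr_mono: "agr N p q \<Longrightarrow> M \<le> N \<Longrightarrow> agr M p q" by (simp add: agr_def)

lemma agr_refl: "agr N p p" by (simp add: agr_def)

lemma agr_pow: assumes "agr N p q" shows "agr N (ps_pow p n) (ps_pow q n)"
  by (induction n) (simp_all add: agr_refl agr_mult assms)

lemma comp_j0:
  assumes B: "wo B 1" and A: "agr N A ps_z" and C: "agr N C ps_zeta" and i: "i \<le> N"
  shows "ps_comp P A B C i 0 k = P i 0 k"
proof -
  define X where "X a b c = ps_mult (ps_pow A a) (ps_mult (ps_pow B b) (ps_pow C c)) i 0 k" for a b c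
  have X1: "X a b c = 0" if "b \<noteq> 0" for a b c
  proof -
    have "wo (ps_mult (ps_pow B b) (ps_pow C c)) (b + 0)"
      by (rule wo_mult[OF pow_wo[OF B] wo_0])
    hence "\<forall>i k. ps_mult (ps_pow B b) (ps_pow C c) i 0 k = 0" using that by (simp add: wo_def)
    thus ?thesis unfolding X_def
      by (simp add: mult_j0[of "ps_pow A a" "ps_mult (ps_pow B b) (ps_pow C c)"])
  qed
  have X0: "X a 0 c = (if i = a \<and> k = c then 1 else 0)" for a c
  proof -
    have "X a 0 c = ps_mult (ps_pow A a) (ps_pow C c) i 0 k"
      unfolding X_def by (simp add: const1_mono mult_one)
    also have "\<dots> = ps_mult (ps_pow ps_z a) (ps_pow ps_zeta c) i 0 k"
      using agr_mult[OF agr_pow[OF A] agr_pow[OF C]] i unfolding agr_def by blast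
    also have "\<dots> = (if i = a \<and> k = c then 1 else 0)"
      by (simp add: ps_z_mono ps_zeta_mono pow_mono mono3_mult) (simp add: mono3_def)
    finally show ?thesis .
  qed
  have "ps_comp P A B C i 0 k =
     (\<Sum>a\<le>i+k. \<Sum>b\<le>i+k-a. \<Sum>c\<le>i+k-a-b. P a b c * X a b c)"
    by (simp add: ps_comp_def X_def)
  also have "\<dots> = (\<Sum>a\<le>i+k. \<Sum>c\<le>i+k-a. P a 0 c * X a 0 c)"
  proof -
    have key: "(\<Sum>b\<le>i+k-a. \<Sum>c\<le>i+k-a-b. P a b c * X a b c) = (\<Sum>c\<le>i+k-a. P a 0 c * X a 0 c)" for a
      using sum_single[of "{..i+k-a}" 0 "\<lambda>b. \<Sum>c\<le>i+k-a-b. P a b c * X a b c"] by (simp add: X1)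
    show ?thesis by (simp only: key)
  qed
  also have "\<dots> = (\<Sum>c\<le>i+k-i. P i 0 c * X i 0 c)"
    by (rule sum_single) (auto simp: X0)
  also have "\<dots> = P i 0 k"
    by (rule trans[OF sum_single[where n=k]]) (auto simp: X0)
  finally show ?thesis .
qed

lemma mult_zero_right: "ps_mult p (\<lambda>i j k. 0) = (\<lambda>i j k. 0)"
  by (simp add: ps_mult_def fun_eq_iff)

lemma D_exp:
  "ps_D m Phi h i j k = of_nat (i+1) * h (i+1) j k
     + (if m \<le> j \<and> 1 \<le> k then of_nat (j-m+1) * h i (j-m+1) (k-1) else 0)
     + ps_mult (ps_diff Phi (ps_mult (ps_const (of_nat m)) (ps_mult (ps_pow ps_w (m - 1)) (ps_pow ps_zeta 2)))) (ps_dzeta h) i j k"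
  unfolding ps_D_def ps_add_def
  by (simp add: ps_w_mono ps_zeta_mono pow_mono mono3_mult mult_mono3 ps_dz_def ps_dw_def add.assoc)

lemma T_j0:
  assumes "m \<ge> 1"
  shows "ps_diff Phi (ps_mult (ps_const (of_nat m)) (ps_mult (ps_pow ps_w (m - 1)) (ps_pow ps_zeta 2))) a 0 c
     = Phi a 0 c - (if a = 0 \<and> m = 1 \<and> c = 2 then 1 else 0)"
  using assms
  by (auto simp: ps_diff_def mult_const ps_w_mono ps_zeta_mono pow_mono mono3_mult) (auto simp: mono3_def)

lemma mult_lead1:
  assumes "wo W 1" "lead W 1"
  shows "ps_mult W X i 1 k = X i 0 k"
proof -
  have "ps_mult W X i (1+0) k = (\<Sum>a\<le>i. \<Sum>c\<le>k. W a 1 c * X (i-a) 0 (k-c))"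
    by (rule wo_mult_coeff[OF assms(1) wo_0])
  also have "\<dots> = X i 0 k" by (rule lead_delta[OF assms(2), where Q="\<lambda>i k. X i 0 k"])
  finally show ?thesis by simp
qed

lemma mult_c0:
  assumes "\<And>a c. c \<noteq> 0 \<Longrightarrow> p a 0 c = 0"
  shows "ps_mult p q i 0 k = (\<Sum>a\<le>i. p a 0 0 * q (i-a) 0 k)"
  unfolding mult_j0
proof (rule sum.cong[OF refl])
  fix a
  show "(\<Sum>c\<le>k. p a 0 c * q (i - a) 0 (k - c)) = p a 0 0 * q (i - a) 0 k"
    using assms by (subst single_delta[where a=0]) auto
qed

lemma mult_j1': "ps_mult p q i 1 k =
   (\<Sum>a\<le>i. \<Sum>c\<le>k. p a 0 c * q (i-a) 1 (k-c) + p a 1 c * q (i-a) 0 (k-c))"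
  using mult_j1[of p q i k] by simp

theorem lemma4p2:
  fixes m :: nat and Phi Phis :: ps3
  assumes "m \<ge> 1"
    and "\<forall>i j k. k < 2 \<longrightarrow> Phi i j k = 0"
    and "\<forall>i j k. k < 2 \<longrightarrow> Phis i j k = 0"
    and "\<exists>f g0 g. admissible m Phi Phis f g0 g"
  shows "coef_A Phi 0 0 = coef_A Phis 0 0 \<and> coef_A Phi 1 0 = coef_A Phis 1 0 \<and>
         coef_B Phi 0 0 = coef_B Phis 0 0 \<and> coef_B Phi 1 0 = coef_B Phis 1 0"
proof -
  have m1: "m \<ge> 1" by fact
  obtain f g0 g where adm: "admissible m Phi Phis f g0 g" using assms(4) by blast
  define Z where "Z = ps_add ps_z (ps_of2 f)"
  define W where "W = ps_add ps_w (ps_add (ps_mult ps_w (ps_of_w g0))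
                                  (ps_mult (ps_pow ps_w m) (ps_of2 g)))"
  have f00: "f 0 0 = 0" and f10: "f 1 0 = 0" and g00: "g0 0 = 0"
    and gz: "\<And>i j. i = 0 \<or> j = 0 \<Longrightarrow> g i j = 0"
    and tr: "transforms_ode m Phi Phis Z W"
    using adm unfolding admissible_def Let_def Z_def W_def by auto
  define DZ where "DZ = ps_D m Phi Z"
  define DW where "DW = ps_D m Phi W"
  obtain Pi where eq1: "ps_mult (ps_pow W m) (ps_mult DZ Pi) = DW"
    and eq2: "ps_add (ps_mult W (ps_D m Phi Pi))
                  (ps_mult (ps_const (of_nat m)) (ps_mult DW Pi))
           = ps_mult W (ps_mult DZ (ps_comp Phis Z W Pi))"
    using tr unfolding transforms_ode_def DZ_def DW_def by blast
  define T where "T = ps_diff Phi (ps_mult (ps_const (of_nat m)) (ps_mult (ps_pow ps_w (m - 1)) (ps_pow ps_zeta 2)))"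
  have T0: "T a 0 c = Phi a 0 c - (if a = 0 \<and> m = 1 \<and> c = 2 then 1 else 0)" for a c
    unfolding T_def using T_j0[OF m1] by simp
  have Dx: "ps_D m Phi h i j k = of_nat (i+1) * h (i+1) j k
     + (if m \<le> j \<and> 1 \<le> k then of_nat (j-m+1) * h i (j-m+1) (k-1) else 0)
     + ps_mult T (ps_dzeta h) i j k" for h i j k
    unfolding T_def by (rule D_exp)
  have Zx: "Z i j k = (if i = 1 \<and> j = 0 \<and> k = 0 then 1 else 0) + (if k = 0 then f i j else 0)" for i j k
    unfolding Z_def by (simp add: ps_add_def ps_z_def ps_of2_def)
  have Wx: "W i j k = (if i = 0 \<and> j = 1 \<and> k = 0 then 1 else 0)
      + (if 1 \<le> j \<and> i = 0 \<and> k = 0 then g0 (j-1) else 0)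
      + (if m \<le> j \<and> k = 0 then g i (j-m) else 0)" for i j k
    unfolding W_def by (simp add: ps_add_def ps_w_mono pow_mono mult_mono3 ps_of_w_def ps_of2_def)
      (simp add: mono3_def)
  have woW: "wo W 1" unfolding wo_def Wx using m1 by auto
  have leadW: "lead W 1" unfolding lead_def Wx using m1 g00 gz by auto
  have dzZ: "ps_dzeta Z = (\<lambda>i j k. 0)" by (simp add: fun_eq_iff ps_dzeta_def Zx)
  have dzW: "ps_dzeta W = (\<lambda>i j k. 0)" by (simp add: fun_eq_iff ps_dzeta_def Wx)
  have DZ0: "DZ a 0 c = (if c = 0 then of_nat (a+1) * ((if a = 0 then 1 else 0) + f (a+1) 0) else 0)" for a c
    unfolding DZ_def Dx dzZ mult_zero_right using m1 by (simp add: Zx)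
  have DWm: "DW i m k = (if i = 0 \<and> k = 1 then 1 else 0)" for i k
    unfolding DW_def Dx dzW mult_zero_right using m1 gz g00 by (simp add: Wx)
  have DW0: "DW i 0 k = 0" for i k
    unfolding DW_def Dx dzW mult_zero_right using m1 gz g00 by (simp add: Wx)
  have DW1: "DW i 1 k = (if m = 1 \<and> i = 0 \<and> k = 1 then 1 else 0)" for i k
    unfolding DW_def Dx dzW mult_zero_right using m1 gz g00 by (simp add: Wx)
  have f1s: "f (Suc 0) 0 = 0" using f10 by simp
  obtain wm: "wo (ps_pow W m) m" and lm: "lead (ps_pow W m) m"
    using pow_wo_lead[OF woW leadW] by blast
  have H1: "ps_mult DZ Pi i 0 k = (if i = 0 \<and> k = 1 then 1 else 0)" for i k
  proof -
    have "DW i (m+0) k = (\<Sum>a\<le>i. \<Sum>c\<le>k. ps_pow W m a m c * ps_mult DZ Pi (i-a) 0 (k-c))"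
      unfolding eq1[symmetric] by (rule wo_mult_coeff[OF wm wo_0])
    also have "\<dots> = ps_mult DZ Pi i 0 k"
      by (rule lead_delta[OF lm, where Q="\<lambda>i k. ps_mult DZ Pi i 0 k"])
    finally show ?thesis using DWm by simp
  qed
  have DZmul: "ps_mult DZ q i 0 k = (\<Sum>a\<le>i. DZ a 0 0 * q (i-a) 0 k)" for q i k
    by (rule mult_c0) (simp add: DZ0)
  have Pi0: "Pi 0 0 k = (if k = 1 then 1 else 0)" for k
    using H1[of 0 k] unfolding DZmul by (simp add: DZ0 f1s)
  have Pi1: "Pi 1 0 k = (if k = 1 then - 2 * f 2 0 else 0)" for k
    using H1[of 1 k] unfolding DZmul by (cases "k = 1") (auto simp: DZ0 f1s Pi0 numeral_2_eq_2 add_eq_0_iff2)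
  define C where "C = ps_comp Phis Z W Pi"
  have ME: "ps_D m Phi Pi i 0 k + of_nat m * ps_mult DW Pi i 1 k = (\<Sum>a\<le>i. DZ a 0 0 * C (i-a) 0 k)" for i k
  proof -
    have "ps_add (ps_mult W (ps_D m Phi Pi)) (ps_mult (ps_const (of_nat m)) (ps_mult DW Pi)) i 1 k
        = ps_mult W (ps_mult DZ C) i 1 k"
      using eq2 unfolding C_def by simp
    thus ?thesis unfolding ps_add_def mult_const mult_lead1[OF woW leadW] DZmul .
  qed
  have DWPi: "ps_mult DW Pi i 1 k = (if m = 1 \<and> 1 \<le> k then Pi i 0 (k-1) else 0)" for i k
    unfolding mult_j1' DW0 DW1 by (subst double_delta[where a=0 and b=1]) auto
  have DPi: "ps_D m Phi Pi i 0 k = of_nat (i+1) * Pi (i+1) 0 k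
     + (\<Sum>a\<le>i. \<Sum>c\<le>k. T a 0 c * (of_nat (k-c+1) * Pi (i-a) 0 (k-c+1)))" for i k
    unfolding Dx mult_j0 using m1 by (simp add: ps_dzeta_def)
  have agZ: "agr 1 Z ps_z" unfolding agr_def Zx using f00 f10 by (auto simp: ps_z_def le_Suc_eq)
  have agP0: "agr 0 Pi ps_zeta" unfolding agr_def using Pi0 by (simp add: ps_zeta_def)
  have C00: "C 0 0 k = Phis 0 0 k" for k
    unfolding C_def by (rule comp_j0[OF woW agr_mono[OF agZ, of 0] agP0]) simp_all
  have "Pi 1 0 1 = 0"
    using ME[of 0 1] unfolding DPi DWPi by (cases "m = 1") (simp_all add: C00 T0 DZ0 f1s Pi0 assms(2,3))
  hence f20: "f 2 0 = 0" using Pi1[of 1] by simp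
  have Pi1': "Pi 1 0 k = 0" for k using Pi1[of k] f20 by simp
  have agP1: "agr 1 Pi ps_zeta" unfolding agr_def using Pi0 Pi1'
    by (auto simp: ps_zeta_def le_Suc_eq)
  have C10: "C 1 0 k = Phis 1 0 k" for k
    unfolding C_def by (rule comp_j0[OF woW agZ agP1]) simp
  have Pi1s: "Pi (Suc 0) 0 k = 0" for k using Pi1'[of k] by simp
  have f2s: "f (Suc (Suc 0)) 0 = 0" using f20 by (simp add: numeral_2_eq_2)
  have Pi2: "Pi 2 0 k = 0" if "k \<noteq> 1" for k
    using H1[of 2 k] that unfolding DZmul by (simp add: DZ0 f1s Pi0 Pi1s f2s numeral_2_eq_2)
  have E0: "Phi 0 0 k = Phis 0 0 k" if "k = 2 \<or> k = 3" for k
    using ME[of 0 k] that unfolding DPi DWPi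
    by (cases "m = 1") (auto simp: C00 T0 DZ0 f1s Pi0 Pi1' Pi1s assms(2,3) numeral_2_eq_2 numeral_3_eq_3)
  have C10s: "C (Suc 0) 0 k = Phis (Suc 0) 0 k" for k using C10[of k] by simp
  have Pi2s: "Pi (Suc (Suc 0)) 0 k = 0" if "k \<noteq> Suc 0" for k
    using Pi2[of k] that by (simp add: numeral_2_eq_2)
  have E1: "Phi 1 0 k = Phis 1 0 k" if "k = 2 \<or> k = 3" for k
    using ME[of 1 k] that unfolding DPi DWPi
    by (cases "m = 1") (auto simp: C00 C10s T0 DZ0 f1s f2s Pi0 Pi1' Pi1s Pi2s assms(2,3) numeral_2_eq_2 numeral_3_eq_3)
  show ?thesis unfolding coef_A_def coef_B_def using E0 E1 by simp
qed

end
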